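(* Let $d,N\in\mathbb{N}$ and let $C:\mathbb{R}^d\times\mathbb{R}^d\to\mathbb{R}$ be smooth with $C(x,x')=C(-x,-x')$ for all $x,x'$. For multi-indices $\alpha,\beta\in\mathbb{N}_0^d$ let $C_{\alpha,\beta}=\partial_{x_1}^{\alpha_1}\cdots\partial_{x_d}^{\alpha_d}\partial_{x'_1}^{\beta_1}\cdots\partial_{x'_d}^{\beta_d}C$. Let $K=\binom{N+d}{N}$ and $R=(C_{\alpha,\beta}(0,0))_{\alpha,\beta\in\mathbb{N}_0^d,\,|\alpha|,|\beta|\le N}\in\mathbb{R}^{K\times K}$, assumed invertible, let $b=R^{-1}(1,0,\dots,0)^T$ (the first coordinate corresponding to $\alpha=0$), and define $\eta(x)=\sum_{|\alpha|\le N}b_\alpha C_{\alpha,0}(0,x)$. Then $\nabla^j\eta(0)=0$ for all odd integers $j\in\mathbb{N}$.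
   Context: $\nabla^j\eta(0)$ denotes the full derivative of order $j$ (all partial derivatives of order $j$) at $0$. *)

theory Defs
  imports "HOL-Analysis.Analysis"
begin

definition dir_deriv :: "'a::real_normed_vector \<Rightarrow> ('a \<Rightarrow> real) \<Rightarrow> 'a \<Rightarrow> real" where
  "dir_deriv v f x = deriv (\<lambda>t. f (x + t *\<^sub>R v)) 0"

fun dir_derivs :: "'a::real_normed_vector list \<Rightarrow> ('a \<Rightarrow> real) \<Rightarrow> 'a \<Rightarrow> real" where
  "dir_derivs [] f = f"
| "dir_derivs (v # vs) f = dir_deriv v (dir_derivs vs f)"

definition smooth_fun :: "('a::real_normed_vector \<Rightarrow> real) \<Rightarrow> bool" where
  "smooth_fun f \<longleftrightarrow> (\<forall>vs x. dir_derivs vs f differentiable (at x))"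

definition mi_order :: "('d::finite \<Rightarrow> nat) \<Rightarrow> nat" where
  "mi_order \<alpha> = (\<Sum>i\<in>UNIV. \<alpha> i)"

definition mi_list :: "('d::finite \<Rightarrow> nat) \<Rightarrow> 'd list" where
  "mi_list \<alpha> = (SOME ds. \<forall>i. count_list ds i = \<alpha> i)"

definition xdir :: "'d::finite \<Rightarrow> (real^'d) \<times> (real^'d)" where
  "xdir i = (axis i 1, 0)"

definition ydir :: "'d::finite \<Rightarrow> (real^'d) \<times> (real^'d)" where
  "ydir i = (0, axis i 1)"

definition mixed_partial ::
  "('d::finite \<Rightarrow> nat) \<Rightarrow> ('d \<Rightarrow> nat) \<Rightarrow> ((real^'d) \<times> (real^'d) \<Rightarrow> real)
     \<Rightarrow> (real^'d) \<times> (real^'d) \<Rightarrow> real" where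
  "mixed_partial \<alpha> \<beta> C = dir_derivs (map xdir (mi_list \<alpha>) @ map ydir (mi_list \<beta>)) C"

definition multi_indices :: "nat \<Rightarrow> ('d::finite \<Rightarrow> nat) set" where
  "multi_indices N = {\<alpha>. mi_order \<alpha> \<le> N}"

end

theory Submission
  imports Defs "HOL-Library.Multiset"
begin

lemma dir_derivs_append: "dir_derivs (xs @ ys) f = dir_derivs xs (dir_derivs ys f)"
  by (induction xs) auto

lemma deriv_reflect:
  fixes g :: "real \<Rightarrow> real"
  assumes "g differentiable (at 0)"
  shows "deriv (\<lambda>t. s * g (- t)) 0 = - s * deriv g 0"
proof -
  have d: "(g has_real_derivative deriv g 0) (at (- 0))"
    using assms DERIV_deriv_iff_real_differentiable by simp
  have "((\<lambda>t. - t) has_real_derivative -1) (at (0::real))"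
    by (auto intro!: derivative_eq_intros)
  from DERIV_chain2[OF d this]
  have "((\<lambda>t. g (- t)) has_real_derivative deriv g 0 * -1) (at 0)" .
  then have "((\<lambda>t. s * g (- t)) has_real_derivative s * (deriv g 0 * -1)) (at 0)"
    by (rule DERIV_cmult)
  then show ?thesis by (simp add: DERIV_imp_deriv)
qed

lemma line_differentiable:
  fixes D :: "'a::real_normed_vector \<Rightarrow> real"
  assumes "D differentiable (at z)"
  shows "(\<lambda>t. D (z + t *\<^sub>R v)) differentiable (at 0)"
proof -
  have "((\<lambda>t::real. z + t *\<^sub>R v) has_derivative (\<lambda>t. t *\<^sub>R v)) (at 0)"
    by (auto intro!: derivative_eq_intros)
  then have a: "(\<lambda>t::real. z + t *\<^sub>R v) differentiable (at 0)"
    by (auto simp: differentiable_def)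
  have "D differentiable (at ((\<lambda>t::real. z + t *\<^sub>R v) 0))" using assms by simp
  from differentiable_chain_at[OF a this] show ?thesis by (simp add: o_def)
qed

lemma reflect_derivs:
  fixes f :: "'a::real_normed_vector \<Rightarrow> real"
  assumes sm: "\<And>vs x. dir_derivs vs f differentiable (at x)"
    and ev: "\<And>z. f z = f (- z)"
  shows "dir_derivs vs f z = (-1) ^ length vs * dir_derivs vs f (- z)"
proof (induction vs arbitrary: z)
  case Nil
  then show ?case using ev by simp
next
  case (Cons v vs)
  define D where "D = dir_derivs vs f"
  define s :: real where "s = (-1) ^ length vs"
  define g where "g = (\<lambda>t. D (- z + t *\<^sub>R v))"
  have gd: "g differentiable (at 0)"
    unfolding g_def D_def by (rule line_differentiable[OF sm])
  have eq: "(\<lambda>t. D (z + t *\<^sub>R v)) = (\<lambda>t. s * g (- t))"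
  proof
    fix t
    have "D (z + t *\<^sub>R v) = s * D (- (z + t *\<^sub>R v))"
      using Cons.IH unfolding D_def s_def by blast
    also have "- (z + t *\<^sub>R v) = - z + (- t) *\<^sub>R v" by simp
    finally show "D (z + t *\<^sub>R v) = s * g (- t)" unfolding g_def by simp
  qed
  have "dir_derivs (v # vs) f z = deriv (\<lambda>t. D (z + t *\<^sub>R v)) 0"
    by (simp add: dir_deriv_def D_def)
  also have "\<dots> = - s * deriv g 0" unfolding eq by (rule deriv_reflect[OF gd])
  also have "deriv g 0 = dir_derivs (v # vs) f (- z)"
    by (simp add: dir_deriv_def D_def g_def)
  finally show ?case by (simp add: s_def)
qed

lemma odd_derivs_zero:
  fixes f :: "'a::real_normed_vector \<Rightarrow> real"
  assumes sm: "\<And>vs x. dir_derivs vs f differentiable (at x)"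
    and ev: "\<And>z. f z = f (- z)"
    and o: "odd (length vs)"
  shows "dir_derivs vs f 0 = 0"
  using reflect_derivs[OF sm ev, of vs 0] o by simp

lemma slice_derivs:
  fixes F :: "'a::real_normed_vector \<times> 'b::real_normed_vector \<Rightarrow> real"
  shows "dir_derivs ws (\<lambda>x. F (0, x)) x = dir_derivs (map (\<lambda>w. (0, w)) ws) F (0, x)"
proof (induction ws arbitrary: x)
  case Nil
  then show ?case by simp
next
  case (Cons w ws)
  have e: "dir_derivs ws (\<lambda>x. F (0, x)) = (\<lambda>x. dir_derivs (map (\<lambda>w. (0, w)) ws) F (0, x))"
    using Cons.IH by auto
  show ?case by (simp add: e dir_deriv_def)
qed

lemma sum_derivs:
  fixes g :: "'i \<Rightarrow> 'a::real_normed_vector \<Rightarrow> real"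
  assumes sm: "\<And>\<alpha> vs x. \<alpha> \<in> A \<Longrightarrow> dir_derivs vs (g \<alpha>) differentiable (at x)"
  shows "dir_derivs ws (\<lambda>x. \<Sum>\<alpha>\<in>A. b \<alpha> * g \<alpha> x) = (\<lambda>x. \<Sum>\<alpha>\<in>A. b \<alpha> * dir_derivs ws (g \<alpha>) x)"
proof (induction ws)
  case Nil
  then show ?case by simp
next
  case (Cons w ws)
  show ?case
  proof
    fix x
    have "\<And>\<alpha>. \<alpha> \<in> A \<Longrightarrow> ((\<lambda>t. b \<alpha> * dir_derivs ws (g \<alpha>) (x + t *\<^sub>R w)) has_real_derivative
        b \<alpha> * dir_derivs (w # ws) (g \<alpha>) x) (at 0)"
    proof -
      fix \<alpha> assume a: "\<alpha> \<in> A"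
      have "(\<lambda>t. dir_derivs ws (g \<alpha>) (x + t *\<^sub>R w)) differentiable (at 0)"
        by (rule line_differentiable[OF sm[OF a]])
      then have "((\<lambda>t. dir_derivs ws (g \<alpha>) (x + t *\<^sub>R w)) has_real_derivative
          dir_derivs (w # ws) (g \<alpha>) x) (at 0)"
        using DERIV_deriv_iff_real_differentiable by (simp add: dir_deriv_def)
      then show "((\<lambda>t. b \<alpha> * dir_derivs ws (g \<alpha>) (x + t *\<^sub>R w)) has_real_derivative
        b \<alpha> * dir_derivs (w # ws) (g \<alpha>) x) (at 0)" by (rule DERIV_cmult)
    qed
    then have "((\<lambda>t. \<Sum>\<alpha>\<in>A. b \<alpha> * dir_derivs ws (g \<alpha>) (x + t *\<^sub>R w)) has_real_derivative
        (\<Sum>\<alpha>\<in>A. b \<alpha> * dir_derivs (w # ws) (g \<alpha>) x)) (at 0)"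
      by (rule DERIV_sum)
    then show "dir_derivs (w # ws) (\<lambda>x. \<Sum>\<alpha>\<in>A. b \<alpha> * g \<alpha> x) x =
        (\<Sum>\<alpha>\<in>A. b \<alpha> * dir_derivs (w # ws) (g \<alpha>) x)"
      by (simp add: Cons.IH dir_deriv_def DERIV_imp_deriv)
  qed
qed

lemma mi_list_count:
  fixes \<alpha> :: "'d::finite \<Rightarrow> nat"
  shows "count_list (mi_list \<alpha>) i = \<alpha> i"
proof -
  have "count (Abs_multiset \<alpha>) = \<alpha>" by (rule count_Abs_multiset) simp
  obtain xs where "mset xs = Abs_multiset \<alpha>" using ex_mset by blast
  then have "\<forall>i. count_list xs i = \<alpha> i"
    using \<open>count (Abs_multiset \<alpha>) = \<alpha>\<close> by (metis count_mset)
  then have "\<exists>ds. \<forall>i. count_list ds i = \<alpha> i" by blast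
  then show ?thesis unfolding mi_list_def by (rule someI_ex[THEN spec])
qed

lemma mi_list_length:
  fixes \<alpha> :: "'d::finite \<Rightarrow> nat"
  shows "length (mi_list \<alpha>) = mi_order \<alpha>"
  using sum_count_set[of "mi_list \<alpha>" UNIV] by (simp add: mi_order_def mi_list_count)

lemma multi_indices_finite: "finite (multi_indices N :: ('d::finite \<Rightarrow> nat) set)"
proof -
  have "multi_indices N \<subseteq> PiE (UNIV :: 'd set) (\<lambda>_. {0..N})"
  proof
    fix \<alpha> :: "'d \<Rightarrow> nat" assume "\<alpha> \<in> multi_indices N"
    then have s: "mi_order \<alpha> \<le> N" by (simp add: multi_indices_def)
    have "\<And>i. \<alpha> i \<le> N"
    proof -
      fix i
      have "\<alpha> i \<le> (\<Sum>j\<in>UNIV. \<alpha> j)" by (rule member_le_sum) auto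
      then show "\<alpha> i \<le> N" using s by (simp add: mi_order_def)
    qed
    then show "\<alpha> \<in> PiE UNIV (\<lambda>_. {0..N})" by auto
  qed
  moreover have "finite (PiE (UNIV :: 'd set) (\<lambda>_. {0..N}))" by (rule finite_PiE) auto
  ultimately show ?thesis by (rule finite_subset)
qed

theorem mainTheorem5:
  fixes N :: nat
    and C :: "(real^'d) \<times> (real^'d) \<Rightarrow> real"
    and Rinv :: "('d \<Rightarrow> nat) \<Rightarrow> ('d \<Rightarrow> nat) \<Rightarrow> real"
  assumes smooth: "smooth_fun C"
    and sym: "\<And>x x'. C (x, x') = C (-x, -x')"
    and inv_right: "\<And>\<alpha> \<beta>. \<alpha> \<in> multi_indices N \<Longrightarrow> \<beta> \<in> multi_indices N \<Longrightarrow>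
        (\<Sum>\<gamma>\<in>multi_indices N. mixed_partial \<alpha> \<gamma> C (0, 0) * Rinv \<gamma> \<beta>)
          = (if \<alpha> = \<beta> then 1 else 0)"
    and inv_left: "\<And>\<alpha> \<beta>. \<alpha> \<in> multi_indices N \<Longrightarrow> \<beta> \<in> multi_indices N \<Longrightarrow>
        (\<Sum>\<gamma>\<in>multi_indices N. Rinv \<alpha> \<gamma> * mixed_partial \<gamma> \<beta> C (0, 0))
          = (if \<alpha> = \<beta> then 1 else 0)"
  shows "let b = (\<lambda>\<alpha>. Rinv \<alpha> (\<lambda>_. 0));
             \<eta> = (\<lambda>x. \<Sum>\<alpha>\<in>multi_indices N. b \<alpha> * mixed_partial \<alpha> (\<lambda>_. 0) C (0, x))
         in \<forall>j. odd j \<longrightarrow> (\<forall>ds :: 'd list. length ds = j \<longrightarrow>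
              dir_derivs (map (\<lambda>i. axis i 1) ds) \<eta> 0 = 0)"
proof -
  define MI where "MI = (multi_indices N :: ('d \<Rightarrow> nat) set)"
  have fin: "finite MI" unfolding MI_def by (rule multi_indices_finite)
  have smC: "\<And>vs x. dir_derivs vs C differentiable (at x)"
    using smooth unfolding smooth_fun_def by blast
  have evC: "C z = C (- z)" for z
  proof (cases z)
    case (Pair a b) then show ?thesis using sym[of a b] by simp
  qed
  have oddC: "\<And>vs. odd (length vs) \<Longrightarrow> dir_derivs vs C 0 = 0"
    by (rule odd_derivs_zero[OF smC evC])
  define R where "R = (\<lambda>\<alpha> \<beta>. mixed_partial \<alpha> \<beta> C (0, 0))"
  define par where "par = (\<lambda>\<alpha>::'d \<Rightarrow> nat. even (mi_order \<alpha>))"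
  have R0: "R \<alpha> \<beta> = 0" if "par \<alpha> \<noteq> par \<beta>" for \<alpha> \<beta>
  proof -
    have "odd (length (map xdir (mi_list \<alpha>) @ map ydir (mi_list \<beta>)))"
      using that by (auto simp: par_def mi_list_length)
    from oddC[OF this] show ?thesis
      by (simp add: R_def mixed_partial_def zero_prod_def)
  qed
  define Rinv' where "Rinv' = (\<lambda>\<alpha> \<beta>. if par \<alpha> = par \<beta> then Rinv \<alpha> \<beta> else 0)"
  have right': "(\<Sum>\<gamma>\<in>MI. R \<alpha> \<gamma> * Rinv' \<gamma> \<beta>) = (if \<alpha> = \<beta> then 1 else 0)"
    if a: "\<alpha> \<in> MI" and b: "\<beta> \<in> MI" for \<alpha> \<beta>
  proof (cases "par \<alpha> = par \<beta>")
    case True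
    have "(\<Sum>\<gamma>\<in>MI. R \<alpha> \<gamma> * Rinv' \<gamma> \<beta>) = (\<Sum>\<gamma>\<in>MI. R \<alpha> \<gamma> * Rinv \<gamma> \<beta>)"
      by (rule sum.cong) (auto simp: Rinv'_def True R0)
    then show ?thesis using inv_right[OF a[unfolded MI_def] b[unfolded MI_def]]
      by (simp add: R_def MI_def)
  next
    case False
    have "(\<Sum>\<gamma>\<in>MI. R \<alpha> \<gamma> * Rinv' \<gamma> \<beta>) = 0"
      by (rule sum.neutral) (auto simp: Rinv'_def R0 False)
    then show ?thesis using False by auto
  qed
  have left: "(\<Sum>\<gamma>\<in>MI. Rinv \<alpha> \<gamma> * R \<gamma> \<beta>) = (if \<alpha> = \<beta> then 1 else 0)"
    if a: "\<alpha> \<in> MI" and b: "\<beta> \<in> MI" for \<alpha> \<beta>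
    using inv_left[OF a[unfolded MI_def] b[unfolded MI_def]] by (simp add: R_def MI_def)
  have Req: "Rinv \<alpha> \<beta> = Rinv' \<alpha> \<beta>" if a: "\<alpha> \<in> MI" and b: "\<beta> \<in> MI" for \<alpha> \<beta>
  proof -
    have "Rinv \<alpha> \<beta> = (\<Sum>\<gamma>\<in>MI. Rinv \<alpha> \<gamma> * (if \<gamma> = \<beta> then 1 else 0))"
      using b fin by (simp add: if_distrib sum.delta cong: if_cong)
    also have "\<dots> = (\<Sum>\<gamma>\<in>MI. Rinv \<alpha> \<gamma> * (\<Sum>\<delta>\<in>MI. R \<gamma> \<delta> * Rinv' \<delta> \<beta>))"
      by (rule sum.cong) (auto simp: right' b)
    also have "\<dots> = (\<Sum>\<gamma>\<in>MI. \<Sum>\<delta>\<in>MI. Rinv \<alpha> \<gamma> * (R \<gamma> \<delta> * Rinv' \<delta> \<beta>))"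
      by (simp add: sum_distrib_left)
    also have "\<dots> = (\<Sum>\<delta>\<in>MI. \<Sum>\<gamma>\<in>MI. Rinv \<alpha> \<gamma> * (R \<gamma> \<delta> * Rinv' \<delta> \<beta>))"
      by (rule sum.swap)
    also have "\<dots> = (\<Sum>\<delta>\<in>MI. (\<Sum>\<gamma>\<in>MI. Rinv \<alpha> \<gamma> * R \<gamma> \<delta>) * Rinv' \<delta> \<beta>)"
      by (simp add: sum_distrib_right mult.assoc)
    also have "\<dots> = (\<Sum>\<delta>\<in>MI. (if \<alpha> = \<delta> then 1 else 0) * Rinv' \<delta> \<beta>)"
      by (rule sum.cong) (auto simp: left a)
    also have "\<dots> = (\<Sum>\<delta>\<in>MI. if \<alpha> = \<delta> then Rinv' \<delta> \<beta> else 0)"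
      by (rule sum.cong) auto
    also have "\<dots> = Rinv' \<alpha> \<beta>"
      using a fin by (simp add: sum.delta)
    finally show ?thesis .
  qed
  have z: "(\<lambda>_. 0) \<in> MI" by (simp add: MI_def multi_indices_def mi_order_def)
  have bz: "Rinv \<alpha> (\<lambda>_. 0) = 0" if "\<alpha> \<in> MI" "odd (mi_order \<alpha>)" for \<alpha>
    using Req[OF that(1) z] that(2) by (simp add: Rinv'_def par_def mi_order_def)
  define g where "g = (\<lambda>\<alpha> x. mixed_partial \<alpha> (\<lambda>_. 0) C (0, x))"
  have gd: "dir_derivs ws (g \<alpha>) x
      = dir_derivs (map (\<lambda>w. (0, w)) ws @ map xdir (mi_list \<alpha>)) C (0, x)" for ws \<alpha> x
  proof -
    have ml0: "mi_list (\<lambda>_::'d. 0::nat) = []"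
      using mi_list_length[of "\<lambda>_::'d. 0::nat"] by (simp add: mi_order_def)
    show ?thesis unfolding g_def
      by (simp add: slice_derivs mixed_partial_def ml0 dir_derivs_append)
  qed
  have gsm: "dir_derivs vs (g \<alpha>) differentiable (at x)" for vs \<alpha> x
  proof -
    have e: "dir_derivs vs (g \<alpha>) = (\<lambda>x. dir_derivs (map (\<lambda>w. (0, w)) vs @ map xdir (mi_list \<alpha>)) C (0, x))"
      using gd by auto
    have "((\<lambda>x::real^'d. ((0::real^'d), x)) has_derivative (\<lambda>x. (0, x))) (at x)"
      by (auto intro!: derivative_eq_intros)
    then have a: "(\<lambda>x::real^'d. ((0::real^'d), x)) differentiable (at x)"
      by (auto simp: differentiable_def)
    have "dir_derivs (map (\<lambda>w. (0, w)) vs @ map xdir (mi_list \<alpha>)) C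
        differentiable (at ((\<lambda>x::real^'d. ((0::real^'d), x)) x))" by (rule smC)
    from differentiable_chain_at[OF a this] show ?thesis by (simp add: e o_def)
  qed
  show ?thesis
  proof (simp only: Let_def, intro allI impI)
    fix j and ds :: "'d list"
    assume oj: "odd j" and lj: "length ds = j"
    let ?ws = "map (\<lambda>i. axis i 1) ds :: (real^'d) list"
    have "dir_derivs ?ws (\<lambda>x. \<Sum>\<alpha>\<in>MI. Rinv \<alpha> (\<lambda>_. 0) * g \<alpha> x) 0
        = (\<Sum>\<alpha>\<in>MI. Rinv \<alpha> (\<lambda>_. 0) * dir_derivs ?ws (g \<alpha>) 0)"
      by (simp add: sum_derivs[OF gsm])
    also have "\<dots> = 0"
    proof (rule sum.neutral, intro ballI)
      fix \<alpha> assume a: "\<alpha> \<in> MI"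
      show "Rinv \<alpha> (\<lambda>_. 0) * dir_derivs ?ws (g \<alpha>) 0 = 0"
      proof (cases "odd (mi_order \<alpha>)")
        case True
        then show ?thesis using bz[OF a] by simp
      next
        case False
        have "odd (length (map (\<lambda>w. (0::real^'d, w)) ?ws @ map xdir (mi_list \<alpha>)))"
          using False oj lj by (simp add: mi_list_length)
        then have "dir_derivs (map (\<lambda>w. (0::real^'d, w)) ?ws @ map xdir (mi_list \<alpha>)) C 0 = 0"
          by (rule oddC)
        then show ?thesis by (simp add: gd zero_prod_def)
      qed
    qed
    finally show "dir_derivs ?ws (\<lambda>x. \<Sum>\<alpha>\<in>multi_indices N. Rinv \<alpha> (\<lambda>_. 0) *
        mixed_partial \<alpha> (\<lambda>_. 0) C (0, x)) 0 = 0"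
      by (simp add: MI_def g_def)
  qed
qed

end
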